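(* For each $\varepsilon\in\mathrm{U}(1)$ and each $\alpha\in\Sigma_\varepsilon^+$ there exist orthonormal bases $\{X^\varepsilon_{\alpha,i}\}_{i=1}^{m(\alpha,\varepsilon)}$ of $V(\alpha,\varepsilon)\cap\mathfrak k_1$ and $\{Y^\varepsilon_{\alpha,i}\}_{i=1}^{m(\alpha,\varepsilon)}$ of $V(\alpha,\varepsilon)\cap\mathfrak m_1$ such that: (1) for every $H\in\mathfrak a$ and every $i$, $[H,X^\varepsilon_{\alpha,i}]=\langle\alpha,H\rangle Y^\varepsilon_{\alpha,i}$, $[H,Y^\varepsilon_{\alpha,i}]=-\langle\alpha,H\rangle X^\varepsilon_{\alpha,i}$, $[X^\varepsilon_{\alpha,i},Y^\varepsilon_{\alpha,i}]=\alpha$, and $\mathrm{Ad}(\exp H)X^\varepsilon_{\alpha,i}=\cos\langle\alpha,H\rangle X^\varepsilon_{\alpha,i}+\sin\langle\alpha,H\rangle Y^\varepsilon_{\alpha,i}$, $\mathrm{Ad}(\exp H)Y^\varepsilon_{\alpha,i}=-\sin\langle\alpha,H\rangle X^\varepsilon_{\alpha,i}+\cos\langle\alpha,H\rangle Y^\varepsilon_{\alpha,i}$; (2) if $H_\varepsilon\in\mathfrak a$ satisfies $\langle\alpha,H_\varepsilon\rangle=\varphi_\varepsilon$ and we put $\widetilde X^\varepsilon_{\alpha,i}=\mathrm{Ad}(\exp H_\varepsilon)^{-1}X^\varepsilon_{\alpha,i}$, $\widetilde Y^\varepsilon_{\alpha,i}=\mathrm{Ad}(\exp H_\varepsilon)^{-1}Y^\varepsilon_{\alpha,i}$,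 then $\{\widetilde X^\varepsilon_{\alpha,i}\}_i$ and $\{\widetilde Y^\varepsilon_{\alpha,i}\}_i$ are orthonormal bases of $V(\alpha,\varepsilon)\cap\mathfrak k_2$ and $V(\alpha,\varepsilon)\cap\mathfrak m_2$ respectively, and the same identities as in (1) hold with $X,Y$ replaced by $\widetilde X,\widetilde Y$ for every $H\in\mathfrak a$.
   Context: Let $G$ be a compact connected semisimple Lie group with Lie algebra $\mathfrak g$, and let $\theta_1,\theta_2$ be involutive automorphisms of $G$ with $(\theta_1\theta_2)^l=\mathrm{id}_G$ for some positive integer $l$; the induced involutions of $\mathfrak g$ and their complex-linear extensions to $\mathfrak g^{\mathbb C}$ are also denoted $\theta_i$. For $i=1,2$ let $K_i$ be a subgroup with $(G_{\theta_i})_0\subset K_i\subset G_{\theta_i}$ ($G_{\theta_i}$ the fixed point group of $\theta_i$), $\mathfrak k_i=\{X\in\mathfrak g:\theta_iX=X\}$, $\mathfrak m_i=\{X\in\mathfrak g:\theta_iX=-X\}$. Fix an $\mathrm{Ad}(G)$-invariant inner product $\langle\cdot,\cdot\rangle$ on $\mathfrak g$ (extended complex-bilinearly where needed). Let $\mathfrak a$ be a maximal abelian subspace of $\mathfrak m_1\cap\mathfrak m_2$; vectors of $\mathfrak a$ are identified with linear forms on $\mathfrak a$ via $\langle\cdot,\cdot\rangle$. For $\alpha\in\mathfrak a$ put $\mathfrak g(\alpha)=\{X\in\mathfrak g^{\mathbb C}:[H,X]=\sqrt{-1}\langle\alpha,H\rangle X\ \forall H\in\mathfrak a\}$ and for $\varepsilon\in\mathrm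 U(1)$ put $\mathfrak g(\alpha,\varepsilon)=\{X\in\mathfrak g(\alpha):\theta_1\theta_2X=\varepsilon X\}$. Let $\tilde\Sigma=\{\alpha\in\mathfrak a\setminus\{0\}:\mathfrak g(\alpha)\ne0\}$ (a root system) and $\Sigma_\varepsilon=\{\alpha\in\mathfrak a\setminus\{0\}:\mathfrak g(\alpha,\varepsilon)\neq0\}$; fix a set of positive roots $\tilde\Sigma^+$ of $\tilde\Sigma$ and put $\Sigma_\varepsilon^+=\Sigma_\varepsilon\cap\tilde\Sigma^+$. Let $m(\alpha,\varepsilon)=\dim_{\mathbb C}\mathfrak g(\alpha,\varepsilon)$. For $\varepsilon\in\mathrm U(1)$ define $\varphi_\varepsilon\in(-\pi/2,\pi/2]$ by $\varepsilon=e^{2\sqrt{-1}\varphi_\varepsilon}$. For $\alpha\in\tilde\Sigma\cup\{0\}$ put $V(\alpha,\varepsilon)=(\mathfrak g(\alpha,\varepsilon)\oplus\mathfrak g(-\alpha,\varepsilon^{-1}))\cap\mathfrak g$ (real form, intersection with the compact real form $\mathfrak g\subset\mathfrak g^{\mathbb C}$); it is $\theta_1$- and $\theta_2$-invariant and has real dimension $m(\alpha,\varepsilon)$. *)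

theory Defs
  imports "HOL-Analysis.Analysis"
begin

text \<open>The Lie algebra g of G is a finite-dimensional real
inner product space (type 'g, whose inner product is the fixed Ad(G)-invariant one)
with a bracket br. The complexification g^C is modelled as pairs (u,v) = u + i v.\<close>

definition lie_algebra :: "('g::euclidean_space \<Rightarrow> 'g \<Rightarrow> 'g) \<Rightarrow> bool" where
  "lie_algebra br \<longleftrightarrow> bilinear br \<and> (\<forall>x y. br x y = - br y x) \<and>
     (\<forall>x y z. br x (br y z) + br y (br z x) + br z (br x y) = 0)"

definition lie_ideal :: "('g::euclidean_space \<Rightarrow> 'g \<Rightarrow> 'g) \<Rightarrow> 'g set \<Rightarrow> bool" where
  "lie_ideal br I \<longleftrightarrow> subspace I \<and> (\<forall>x y. y \<in> I \<longrightarrow> br x y \<in> I)"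

definition semisimple :: "('g::euclidean_space \<Rightarrow> 'g \<Rightarrow> 'g) \<Rightarrow> bool" where
  "semisimple br \<longleftrightarrow>
     (\<forall>I. lie_ideal br I \<and> (\<forall>x\<in>I. \<forall>y\<in>I. br x y = 0) \<longrightarrow> I = {0})"

text \<open>Ad-invariance of the inner product (infinitesimal form; G connected).\<close>
definition ad_invariant_inner :: "('g::euclidean_space \<Rightarrow> 'g \<Rightarrow> 'g) \<Rightarrow> bool" where
  "ad_invariant_inner br \<longleftrightarrow> (\<forall>x y z. br x y \<bullet> z = - (y \<bullet> br x z))"

definition lie_involution :: "('g::euclidean_space \<Rightarrow> 'g \<Rightarrow> 'g) \<Rightarrow> ('g \<Rightarrow> 'g) \<Rightarrow> bool" where
  "lie_involution br \<theta> \<longleftrightarrow> linear \<theta> \<and> bij \<theta> \<and>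
     (\<forall>x y. \<theta> (br x y) = br (\<theta> x) (\<theta> y)) \<and> (\<forall>x. \<theta> (\<theta> x) = x)"

definition fix_space :: "('g::euclidean_space \<Rightarrow> 'g) \<Rightarrow> 'g set" where
  "fix_space \<theta> = {x. \<theta> x = x}"

definition neg_space :: "('g::euclidean_space \<Rightarrow> 'g) \<Rightarrow> 'g set" where
  "neg_space \<theta> = {x. \<theta> x = - x}"

definition max_abelian :: "('g::euclidean_space \<Rightarrow> 'g \<Rightarrow> 'g) \<Rightarrow> 'g set \<Rightarrow> 'g set \<Rightarrow> bool" where
  "max_abelian br S A \<longleftrightarrow> subspace A \<and> A \<subseteq> S \<and> (\<forall>x\<in>A. \<forall>y\<in>A. br x y = 0) \<and>
     (\<forall>B. subspace B \<and> A \<subseteq> B \<and> B \<subseteq> S \<and> (\<forall>x\<in>B. \<forall>y\<in>B. br x y = 0) \<longrightarrow> B = A)"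

text \<open>Ad(exp H) = e^{ad H}.\<close>
definition Ad_exp :: "('g::euclidean_space \<Rightarrow> 'g \<Rightarrow> 'g) \<Rightarrow> 'g \<Rightarrow> 'g \<Rightarrow> 'g" where
  "Ad_exp br H X = (\<Sum>n. ((br H) ^^ n) X /\<^sub>R fact n)"

text \<open>g(alpha) inside g^C = g x g: [H,u+iv] = i<alpha,H>(u+iv).\<close>
definition root_space :: "('g::euclidean_space \<Rightarrow> 'g \<Rightarrow> 'g) \<Rightarrow> 'g set \<Rightarrow> 'g \<Rightarrow> ('g \<times> 'g) set" where
  "root_space br A \<alpha> = {(u, v). \<forall>H\<in>A. br H u = - ((\<alpha> \<bullet> H) *\<^sub>R v) \<and> br H v = (\<alpha> \<bullet> H) *\<^sub>R u}"

text \<open>g(alpha, eps): additionally theta1 theta2 (u+iv) = eps (u+iv).\<close>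
definition eps_root_space ::
  "('g::euclidean_space \<Rightarrow> 'g \<Rightarrow> 'g) \<Rightarrow> ('g \<Rightarrow> 'g) \<Rightarrow> ('g \<Rightarrow> 'g) \<Rightarrow> 'g set \<Rightarrow> 'g \<Rightarrow> complex \<Rightarrow> ('g \<times> 'g) set" where
  "eps_root_space br \<theta>1 \<theta>2 A \<alpha> \<epsilon> = {(u, v) \<in> root_space br A \<alpha>.
      \<theta>1 (\<theta>2 u) = Re \<epsilon> *\<^sub>R u - Im \<epsilon> *\<^sub>R v \<and> \<theta>1 (\<theta>2 v) = Im \<epsilon> *\<^sub>R u + Re \<epsilon> *\<^sub>R v}"

definition restricted_roots :: "('g::euclidean_space \<Rightarrow> 'g \<Rightarrow> 'g) \<Rightarrow> 'g set \<Rightarrow> 'g set" where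
  "restricted_roots br A = {\<alpha> \<in> A. \<alpha> \<noteq> 0 \<and> root_space br A \<alpha> \<noteq> {0}}"

definition Sigma_eps ::
  "('g::euclidean_space \<Rightarrow> 'g \<Rightarrow> 'g) \<Rightarrow> ('g \<Rightarrow> 'g) \<Rightarrow> ('g \<Rightarrow> 'g) \<Rightarrow> 'g set \<Rightarrow> complex \<Rightarrow> 'g set" where
  "Sigma_eps br \<theta>1 \<theta>2 A \<epsilon> = {\<alpha> \<in> A. \<alpha> \<noteq> 0 \<and> eps_root_space br \<theta>1 \<theta>2 A \<alpha> \<epsilon> \<noteq> {0}}"

definition positive_system :: "('g::euclidean_space \<Rightarrow> 'g \<Rightarrow> 'g) \<Rightarrow> 'g set \<Rightarrow> 'g set \<Rightarrow> bool" where
  "positive_system br A P \<longleftrightarrow> (\<exists>v\<in>A. (\<forall>\<beta>\<in>restricted_roots br A. \<beta> \<bullet> v \<noteq> 0) \<and>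
      P = {\<beta> \<in> restricted_roots br A. 0 < \<beta> \<bullet> v})"

text \<open>Complex dimension of g(alpha,eps) = half of its real dimension.\<close>
definition mult ::
  "('g::euclidean_space \<Rightarrow> 'g \<Rightarrow> 'g) \<Rightarrow> ('g \<Rightarrow> 'g) \<Rightarrow> ('g \<Rightarrow> 'g) \<Rightarrow> 'g set \<Rightarrow> 'g \<Rightarrow> complex \<Rightarrow> nat" where
  "mult br \<theta>1 \<theta>2 A \<alpha> \<epsilon> = dim (eps_root_space br \<theta>1 \<theta>2 A \<alpha> \<epsilon>) div 2"

text \<open>V(alpha,eps) = (g(alpha,eps) + g(-alpha,eps^-1)) \<inter> g.\<close>
definition V_space ::
  "('g::euclidean_space \<Rightarrow> 'g \<Rightarrow> 'g) \<Rightarrow> ('g \<Rightarrow> 'g) \<Rightarrow> ('g \<Rightarrow> 'g) \<Rightarrow> 'g set \<Rightarrow> 'g \<Rightarrow> complex \<Rightarrow> 'g set" where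
  "V_space br \<theta>1 \<theta>2 A \<alpha> \<epsilon> = {x. \<exists>z1\<in>eps_root_space br \<theta>1 \<theta>2 A \<alpha> \<epsilon>.
      \<exists>z2\<in>eps_root_space br \<theta>1 \<theta>2 A (- \<alpha>) (inverse \<epsilon>). z1 + z2 = (x, 0)}"

definition phi_eps :: "complex \<Rightarrow> real" where
  "phi_eps \<epsilon> = (THE \<phi>. - (pi / 2) < \<phi> \<and> \<phi> \<le> pi / 2 \<and> \<epsilon> = cis (2 * \<phi>))"

definition orthonormal_basis_of :: "'g::euclidean_space set \<Rightarrow> nat \<Rightarrow> (nat \<Rightarrow> 'g) \<Rightarrow> bool" where
  "orthonormal_basis_of W m X \<longleftrightarrow> (\<forall>i<m. X i \<in> W) \<and>
     (\<forall>i<m. \<forall>j<m. X i \<bullet> X j = (if i = j then 1 else 0)) \<and> span (X ` {..<m}) = W"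

definition bracket_identities ::
  "('g::euclidean_space \<Rightarrow> 'g \<Rightarrow> 'g) \<Rightarrow> 'g set \<Rightarrow> 'g \<Rightarrow> nat \<Rightarrow> (nat \<Rightarrow> 'g) \<Rightarrow> (nat \<Rightarrow> 'g) \<Rightarrow> bool" where
  "bracket_identities br A \<alpha> m X Y \<longleftrightarrow> (\<forall>H\<in>A. \<forall>i<m.
      br H (X i) = (\<alpha> \<bullet> H) *\<^sub>R Y i \<and>
      br H (Y i) = - ((\<alpha> \<bullet> H) *\<^sub>R X i) \<and>
      br (X i) (Y i) = \<alpha> \<and>
      Ad_exp br H (X i) = cos (\<alpha> \<bullet> H) *\<^sub>R X i + sin (\<alpha> \<bullet> H) *\<^sub>R Y i \<and>
      Ad_exp br H (Y i) = - (sin (\<alpha> \<bullet> H) *\<^sub>R X i) + cos (\<alpha> \<bullet> H) *\<^sub>R Y i)"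

end

theory Submission
  imports Defs
begin


lemma Cauchy_product_sums_inner:
  fixes a b :: "nat \<Rightarrow> 'a::euclidean_space"
  assumes a: "summable (\<lambda>k. norm (a k))"
    and b: "summable (\<lambda>k. norm (b k))"
  shows "(\<lambda>k. \<Sum>i\<le>k. a i \<bullet> b (k - i)) sums ((\<Sum>k. a k) \<bullet> (\<Sum>k. b k))"
proof -
  let ?S1 = "\<lambda>n::nat. {..<n} \<times> {..<n}"
  let ?S2 = "\<lambda>n::nat. {(i,j). i + j < n}"
  have S1_mono: "\<And>m n. m \<le> n \<Longrightarrow> ?S1 m \<subseteq> ?S1 n" by auto
  have S2_le_S1: "\<And>n. ?S2 n \<subseteq> ?S1 n" by auto
  have S1_le_S2: "\<And>n. ?S1 (n div 2) \<subseteq> ?S2 n" by auto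
  have finite_S1: "\<And>n. finite (?S1 n)" by simp
  with S2_le_S1 have finite_S2: "\<And>n. finite (?S2 n)" by (rule finite_subset)
  let ?g = "\<lambda>(i,j). a i \<bullet> b j"
  let ?f = "\<lambda>(i,j). norm (a i) * norm (b j)"
  have f_nonneg: "\<And>x. 0 \<le> ?f x" by auto
  then have norm_sum_f: "\<And>A. norm (sum ?f A) = sum ?f A"
    unfolding real_norm_def
    by (simp only: abs_of_nonneg sum_nonneg [rule_format])
  have "(\<lambda>n. (\<Sum>k<n. a k) \<bullet> (\<Sum>k<n. b k)) \<longlonglongrightarrow> (\<Sum>k. a k) \<bullet> (\<Sum>k. b k)"
    by (intro tendsto_inner summable_LIMSEQ summable_norm_cancel [OF a] summable_norm_cancel [OF b])
  moreover have "\<And>n. (\<Sum>k<n. a k) \<bullet> (\<Sum>k<n. b k) = sum ?g (?S1 n)"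
  proof -
    fix n
    have "(\<Sum>k<n. a k) \<bullet> (\<Sum>k<n. b k) = (\<Sum>i<n. \<Sum>j<n. a i \<bullet> b j)"
      unfolding inner_sum_left inner_sum_right by (rule sum.swap)
    also have "\<dots> = sum ?g (?S1 n)" by (rule sum.cartesian_product)
    finally show "(\<Sum>k<n. a k) \<bullet> (\<Sum>k<n. b k) = sum ?g (?S1 n)" .
  qed
  ultimately have 1: "(\<lambda>n. sum ?g (?S1 n)) \<longlonglongrightarrow> (\<Sum>k. a k) \<bullet> (\<Sum>k. b k)"
    by simp
  have "(\<lambda>n. (\<Sum>k<n. norm (a k)) * (\<Sum>k<n. norm (b k))) \<longlonglongrightarrow> (\<Sum>k. norm (a k)) * (\<Sum>k. norm (b k))"
    using a b by (intro tendsto_mult summable_LIMSEQ)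
  then have "(\<lambda>n. sum ?f (?S1 n)) \<longlonglongrightarrow> (\<Sum>k. norm (a k)) * (\<Sum>k. norm (b k))"
    by (simp only: sum_product sum.Sigma [rule_format] finite_lessThan)
  then have "convergent (\<lambda>n. sum ?f (?S1 n))"
    by (rule convergentI)
  then have Cauchy: "Cauchy (\<lambda>n. sum ?f (?S1 n))"
    by (rule convergent_Cauchy)
  have "Zfun (\<lambda>n. sum ?f (?S1 n - ?S2 n)) sequentially"
  proof (rule ZfunI, simp only: eventually_sequentially norm_sum_f)
    fix r :: real
    assume r: "0 < r"
    from CauchyD [OF Cauchy r] obtain N
      where "\<forall>m\<ge>N. \<forall>n\<ge>N. norm (sum ?f (?S1 m) - sum ?f (?S1 n)) < r" ..
    then have "\<And>m n. N \<le> n \<Longrightarrow> n \<le> m \<Longrightarrow> norm (sum ?f (?S1 m - ?S1 n)) < r"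
      by (simp only: sum_diff finite_S1 S1_mono)
    then have N: "\<And>m n. N \<le> n \<Longrightarrow> n \<le> m \<Longrightarrow> sum ?f (?S1 m - ?S1 n) < r"
      by (simp only: norm_sum_f)
    show "\<exists>N. \<forall>n\<ge>N. sum ?f (?S1 n - ?S2 n) < r"
    proof (intro exI allI impI)
      fix n
      assume "2 * N \<le> n"
      then have n: "N \<le> n div 2" by simp
      have "sum ?f (?S1 n - ?S2 n) \<le> sum ?f (?S1 n - ?S1 (n div 2))"
        by (intro sum_mono2 finite_Diff finite_S1 f_nonneg Diff_mono subset_refl S1_le_S2)
      also have "\<dots> < r"
        using n div_le_dividend by (rule N)
      finally show "sum ?f (?S1 n - ?S2 n) < r" .
    qed
  qed
  then have "Zfun (\<lambda>n. sum ?g (?S1 n - ?S2 n)) sequentially"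
    apply (rule Zfun_le [rule_format])
    apply (simp only: norm_sum_f)
    apply (rule order_trans [OF norm_sum sum_mono])
    apply (auto simp add: Cauchy_Schwarz_ineq2)
    done
  then have 2: "(\<lambda>n. sum ?g (?S1 n) - sum ?g (?S2 n)) \<longlonglongrightarrow> 0"
    unfolding tendsto_Zfun_iff diff_0_right
    by (simp only: sum_diff finite_S1 S2_le_S1)
  with 1 have "(\<lambda>n. sum ?g (?S2 n)) \<longlonglongrightarrow> (\<Sum>k. a k) \<bullet> (\<Sum>k. b k)"
    by (rule Lim_transform2)
  then show ?thesis
    by (simp only: sums_def sum.triangle_reindex)
qed

definition expo :: "('g::euclidean_space \<Rightarrow> 'g) \<Rightarrow> 'g \<Rightarrow> 'g" where
  "expo D x = (\<Sum>n. (D ^^ n) x /\<^sub>R fact n)"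

lemma Ad_exp_expo: "Ad_exp br H = expo (br H)"
  by (simp add: fun_eq_iff Ad_exp_def expo_def)

lemma expo_summable_norm:
  fixes D :: "'g::euclidean_space \<Rightarrow> 'g"
  assumes "linear D"
  shows "summable (\<lambda>n. norm ((D ^^ n) x /\<^sub>R fact n))"
proof -
  have "bounded_linear D" using assms linear_conv_bounded_linear by blast
  then obtain K where K: "K > 0" "\<And>x. norm (D x) \<le> norm x * K"
    using bounded_linear.pos_bounded by blast
  have pw: "norm ((D ^^ n) x) \<le> norm x * K ^ n" for n
  proof (induction n)
    case 0 then show ?case by simp
  next
    case (Suc n)
    have "norm ((D ^^ Suc n) x) \<le> norm ((D ^^ n) x) * K" using K(2) by simp
    also have "\<dots> \<le> norm x * K ^ n * K" using Suc K(1) by (simp add: mult_right_mono)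
    finally show ?case by (simp add: mult.commute mult.left_commute)
  qed
  show ?thesis
  proof (rule summable_comparison_test)
    show "\<exists>N. \<forall>n\<ge>N. norm (norm ((D ^^ n) x /\<^sub>R fact n)) \<le> norm x * (inverse (fact n) * K ^ n)"
      using pw by (auto simp: divide_simps mult.commute mult.left_commute)
    show "summable (\<lambda>n. norm x * (inverse (fact n) * K ^ n))"
      by (intro summable_mult summable_exp)
  qed
qed

lemma expo_sums:
  fixes D :: "'g::euclidean_space \<Rightarrow> 'g"
  assumes "linear D"
  shows "(\<lambda>n. (D ^^ n) x /\<^sub>R fact n) sums expo D x"
  unfolding expo_def using summable_norm_cancel[OF expo_summable_norm[OF assms]]
  by (simp add: summable_sums)

lemma funpow_linear: "linear (D::'a::real_vector \<Rightarrow> 'a) \<Longrightarrow> linear (D ^^ n)"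
proof (induction n)
  case 0
  have "D ^^ 0 = id" by (rule ext) simp
  then show ?case by (simp add: linear_ident)
next
  case (Suc n)
  then have "linear (D \<circ> D ^^ n)" by (intro linear_compose) auto
  then show ?case by (simp add: o_def)
qed

lemma expo_diff:
  fixes D :: "'g::euclidean_space \<Rightarrow> 'g"
  assumes "linear D"
  shows "expo D (x - y) = expo D x - expo D y"
proof -
  have "(\<lambda>n. (D ^^ n) x /\<^sub>R fact n - (D ^^ n) y /\<^sub>R fact n) sums (expo D x - expo D y)"
    by (intro sums_diff expo_sums assms)
  moreover have "\<And>n. (D ^^ n) x /\<^sub>R fact n - (D ^^ n) y /\<^sub>R fact n = (D ^^ n) (x - y) /\<^sub>R fact n"
    using funpow_linear[OF assms] by (simp add: linear_diff scaleR_diff_right)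
  ultimately have "(\<lambda>n. (D ^^ n) (x - y) /\<^sub>R fact n) sums (expo D x - expo D y)" by simp
  then show ?thesis using expo_sums[OF assms] sums_unique2 by blast
qed

lemma skew_pow:
  fixes D :: "'g::euclidean_space \<Rightarrow> 'g"
  assumes skew: "\<And>u v. D u \<bullet> v = - (u \<bullet> D v)"
  shows "(D ^^ i) u \<bullet> v = (-1) ^ i * (u \<bullet> (D ^^ i) v)"
proof (induction i arbitrary: v)
  case 0 then show ?case by simp
next
  case (Suc i)
  have "(D ^^ Suc i) u \<bullet> v = - ((D ^^ i) u \<bullet> D v)" using skew by simp
  also have "\<dots> = - ((-1) ^ i * (u \<bullet> (D ^^ i) (D v)))" using Suc by simp
  also have "(D ^^ i) (D v) = (D ^^ Suc i) v" by (simp add: funpow_Suc_right del: funpow.simps)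
  finally show ?case by simp
qed

lemma expo_norm:
  fixes D :: "'g::euclidean_space \<Rightarrow> 'g"
  assumes lin: "linear D" and skew: "\<And>u v. D u \<bullet> v = - (u \<bullet> D v)"
  shows "expo D x \<bullet> expo D x = x \<bullet> x"
proof -
  let ?a = "\<lambda>n. (D ^^ n) x /\<^sub>R fact n"
  have s: "(\<lambda>k. \<Sum>i\<le>k. ?a i \<bullet> ?a (k - i)) sums ((\<Sum>k. ?a k) \<bullet> (\<Sum>k. ?a k))"
    by (intro Cauchy_product_sums_inner expo_summable_norm lin)
  have t: "(\<Sum>i\<le>k. ?a i \<bullet> ?a (k - i)) = (if k = 0 then x \<bullet> x else 0)" for k
  proof -
    have "(\<Sum>i\<le>k. ?a i \<bullet> ?a (k - i)) = (\<Sum>i\<le>k. ((-1) ^ i * of_nat (k choose i)) * ((x \<bullet> (D ^^ k) x) / fact k))"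
    proof (rule sum.cong[OF refl])
      fix i assume "i \<in> {..k}"
      then have ik: "i \<le> k" by simp
      have "?a i \<bullet> ?a (k - i) = ((D ^^ i) x \<bullet> (D ^^ (k - i)) x) / (fact i * fact (k - i))"
        by (simp add: divide_inverse)
      also have "(D ^^ i) x \<bullet> (D ^^ (k - i)) x = (-1) ^ i * (x \<bullet> (D ^^ i) ((D ^^ (k - i)) x))"
        by (rule skew_pow[OF skew])
      also have "(D ^^ i) ((D ^^ (k - i)) x) = (D ^^ k) x"
        using ik by (metis funpow_add comp_apply le_add_diff_inverse)
      finally show "?a i \<bullet> ?a (k - i) = ((-1) ^ i * of_nat (k choose i)) * ((x \<bullet> (D ^^ k) x) / fact k)"
        using ik by (simp add: binomial_fact)
    qed
    also have "\<dots> = (\<Sum>i\<le>k. (-1) ^ i * of_nat (k choose i)) * ((x \<bullet> (D ^^ k) x) / fact k)"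
      by (rule sum_distrib_right[symmetric])
    also have "\<dots> = (if k = 0 then x \<bullet> x else 0)"
      by (cases "k = 0") (simp_all add: choose_alternating_sum)
    finally show ?thesis .
  qed
  have "(\<lambda>k. if k = 0 then x \<bullet> x else 0) sums (x \<bullet> x)"
    using sums_single[of 0 "\<lambda>_. x \<bullet> x"] by simp
  then show ?thesis using s unfolding t expo_def by (simp add: sums_unique2)
qed

lemma expo_inj:
  fixes D :: "'g::euclidean_space \<Rightarrow> 'g"
  assumes lin: "linear D" and skew: "\<And>u v. D u \<bullet> v = - (u \<bullet> D v)"
  shows "inj (expo D)"
proof (rule injI)
  fix x y assume "expo D x = expo D y"
  then have "expo D (x - y) = 0" by (simp add: expo_diff[OF lin])
  then have "(x - y) \<bullet> (x - y) = 0" using expo_norm[OF lin skew, of "x - y"] by simp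
  then show "x = y" by simp
qed

lemma expo_rot:
  fixes D :: "'g::euclidean_space \<Rightarrow> 'g"
  assumes lin: "linear D" and hx: "D x = a *\<^sub>R y" and hy: "D y = - (a *\<^sub>R x)"
  shows "expo D x = cos a *\<^sub>R x + sin a *\<^sub>R y"
proof -
  have pw: "(D ^^ n) x = (fact n * cos_coeff n * a ^ n) *\<^sub>R x + (fact n * sin_coeff n * a ^ n) *\<^sub>R y" for n
  proof (induction n)
    case 0 then show ?case by (simp add: cos_coeff_def sin_coeff_def)
  next
    case (Suc n)
    have c1: "fact (Suc n) * cos_coeff (Suc n) * a ^ Suc n = - (fact n * sin_coeff n * a ^ n * a)"
      by (simp add: cos_coeff_Suc field_simps)
    have c2: "fact (Suc n) * sin_coeff (Suc n) * a ^ Suc n = fact n * cos_coeff n * a ^ n * a"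
      by (simp add: sin_coeff_Suc field_simps)
    have "(D ^^ Suc n) x = D ((fact n * cos_coeff n * a ^ n) *\<^sub>R x + (fact n * sin_coeff n * a ^ n) *\<^sub>R y)"
      using Suc by simp
    also have "\<dots> = (fact n * cos_coeff n * a ^ n * a) *\<^sub>R y - (fact n * sin_coeff n * a ^ n * a) *\<^sub>R x"
      using lin hx hy by (simp add: linear_add linear_scale)
    finally show ?case
      unfolding c1 c2 by simp
  qed
  have "(\<lambda>n. (cos_coeff n * a ^ n) *\<^sub>R x + (sin_coeff n * a ^ n) *\<^sub>R y) sums (cos a *\<^sub>R x + sin a *\<^sub>R y)"
    by (intro sums_add sums_scaleR_left) (use cos_converges[of a] sin_converges[of a] in simp_all)
  moreover have "\<And>n. (D ^^ n) x /\<^sub>R fact n = (cos_coeff n * a ^ n) *\<^sub>R x + (sin_coeff n * a ^ n) *\<^sub>R y"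
    by (simp add: pw scaleR_add_right field_simps)
  ultimately show ?thesis using expo_sums[OF lin, of x] sums_unique2 by fastforce
qed



locale LS =
  fixes br :: "'g::euclidean_space \<Rightarrow> 'g \<Rightarrow> 'g"
    and \<theta>1 \<theta>2 :: "'g \<Rightarrow> 'g" and A :: "'g set" and \<epsilon> :: complex and \<alpha> :: 'g
  assumes lie: "lie_algebra br" and adinv: "ad_invariant_inner br"
    and inv1: "lie_involution br \<theta>1" and inv2: "lie_involution br \<theta>2"
    and mab: "max_abelian br (neg_space \<theta>1 \<inter> neg_space \<theta>2) A"
    and eps: "cmod \<epsilon> = 1"
    and alpha: "\<alpha> \<in> Sigma_eps br \<theta>1 \<theta>2 A \<epsilon>"
begin

lemma bil: "bilinear br" using lie by (simp add: lie_algebra_def)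
lemma anti: "br x y = - br y x" using lie unfolding lie_algebra_def by blast
lemma jac: "br x (br y z) + br y (br z x) + br z (br x y) = 0" using lie unfolding lie_algebra_def by blast
lemma br_self[simp]: "br x x = 0"
proof -
  have "br x x + br x x = 0" using anti[of x x] by (metis add.left_inverse)
  then have "(2::real) *\<^sub>R br x x = 0" by (simp add: scaleR_2)
  then show ?thesis by simp
qed

lemma brl_add[simp]: "br (x + y) z = br x z + br y z" by (rule bilinear_ladd[OF bil])
lemma brr_add[simp]: "br z (x + y) = br z x + br z y" by (rule bilinear_radd[OF bil])
lemma brl_mul[simp]: "br (c *\<^sub>R x) y = c *\<^sub>R br x y" by (rule bilinear_lmul[OF bil])
lemma brr_mul[simp]: "br x (c *\<^sub>R y) = c *\<^sub>R br x y" by (rule bilinear_rmul[OF bil])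
lemma brl_neg[simp]: "br (- x) y = - br x y" by (rule bilinear_lneg[OF bil])
lemma brr_neg[simp]: "br x (- y) = - br x y" by (rule bilinear_rneg[OF bil])
lemma brl_sub[simp]: "br (x - y) z = br x z - br y z" by (rule bilinear_lsub[OF bil])
lemma brr_sub[simp]: "br z (x - y) = br z x - br z y" by (rule bilinear_rsub[OF bil])
lemma brl_0[simp]: "br 0 y = 0" using brl_mul[of 0 0 y] by simp
lemma brr_0[simp]: "br x 0 = 0" using brr_mul[of x 0 0] by simp
lemma lin_br: "linear (br H)" using bil by (simp add: bilinear_def)
lemma skew: "br H u \<bullet> v = - (u \<bullet> br H v)" using adinv by (simp add: ad_invariant_inner_def)

lemma th_facts:
  assumes "lie_involution br \<theta>"
  shows "linear \<theta>" "\<theta> (\<theta> x) = x" "\<theta> (br x y) = br (\<theta> x) (\<theta> y)"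
  using assms by (auto simp: lie_involution_def)

lemma th1_add[simp]: "\<theta>1 (x + y) = \<theta>1 x + \<theta>1 y" using th_facts(1)[OF inv1] by (rule linear_add)
lemma th1_mul[simp]: "\<theta>1 (c *\<^sub>R x) = c *\<^sub>R \<theta>1 x" using th_facts(1)[OF inv1] by (rule linear_scale)
lemma th1_neg[simp]: "\<theta>1 (- x) = - \<theta>1 x" using th_facts(1)[OF inv1] by (rule linear_neg)
lemma th1_sub[simp]: "\<theta>1 (x - y) = \<theta>1 x - \<theta>1 y" using th_facts(1)[OF inv1] by (rule linear_diff)
lemma th1_0[simp]: "\<theta>1 0 = 0" using th_facts(1)[OF inv1] by (rule linear_0)
lemma th1_inv[simp]: "\<theta>1 (\<theta>1 x) = x" using th_facts(2)[OF inv1] .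
lemma th1_br: "\<theta>1 (br x y) = br (\<theta>1 x) (\<theta>1 y)" using th_facts(3)[OF inv1] .
lemma th2_add[simp]: "\<theta>2 (x + y) = \<theta>2 x + \<theta>2 y" using th_facts(1)[OF inv2] by (rule linear_add)
lemma th2_mul[simp]: "\<theta>2 (c *\<^sub>R x) = c *\<^sub>R \<theta>2 x" using th_facts(1)[OF inv2] by (rule linear_scale)
lemma th2_neg[simp]: "\<theta>2 (- x) = - \<theta>2 x" using th_facts(1)[OF inv2] by (rule linear_neg)
lemma th2_sub[simp]: "\<theta>2 (x - y) = \<theta>2 x - \<theta>2 y" using th_facts(1)[OF inv2] by (rule linear_diff)
lemma th2_0[simp]: "\<theta>2 0 = 0" using th_facts(1)[OF inv2] by (rule linear_0)
lemma th2_inv[simp]: "\<theta>2 (\<theta>2 x) = x" using th_facts(2)[OF inv2] .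
lemma th2_br: "\<theta>2 (br x y) = br (\<theta>2 x) (\<theta>2 y)" using th_facts(3)[OF inv2] .

lemma A_sub: "subspace A" using mab by (simp add: max_abelian_def)
lemma A_neg: "H \<in> A \<Longrightarrow> \<theta>1 H = - H \<and> \<theta>2 H = - H"
  using mab by (auto simp: max_abelian_def neg_space_def)
lemma A_ab: "H \<in> A \<Longrightarrow> K \<in> A \<Longrightarrow> br H K = 0"
  using mab by (auto simp: max_abelian_def)
lemma A_max: "subspace B \<Longrightarrow> A \<subseteq> B \<Longrightarrow> B \<subseteq> neg_space \<theta>1 \<inter> neg_space \<theta>2 \<Longrightarrow>
   (\<forall>x\<in>B. \<forall>y\<in>B. br x y = 0) \<Longrightarrow> B = A"
  using mab by (auto simp: max_abelian_def)

lemma alpha_A: "\<alpha> \<in> A" and alpha_nz: "\<alpha> \<noteq> 0"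
  using alpha by (auto simp: Sigma_eps_def)

definition c where "c = \<alpha> \<bullet> \<alpha>"
lemma c_pos: "c > 0" using alpha_nz by (simp add: c_def)

abbreviation E where "E \<equiv> eps_root_space br \<theta>1 \<theta>2 A \<alpha> \<epsilon>"
abbreviation V where "V \<equiv> V_space br \<theta>1 \<theta>2 A \<alpha> \<epsilon>"

lemma memE: "(u, v) \<in> E \<longleftrightarrow> (\<forall>H\<in>A. br H u = - ((\<alpha> \<bullet> H) *\<^sub>R v) \<and> br H v = (\<alpha> \<bullet> H) *\<^sub>R u) \<and>
   \<theta>1 (\<theta>2 u) = Re \<epsilon> *\<^sub>R u - Im \<epsilon> *\<^sub>R v \<and> \<theta>1 (\<theta>2 v) = Im \<epsilon> *\<^sub>R u + Re \<epsilon> *\<^sub>R v"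
  by (simp add: eps_root_space_def root_space_def)

lemma E_sub: "subspace E"
  unfolding subspace_def
proof (intro conjI ballI allI)
  show "0 \<in> E" by (simp add: zero_prod_def memE)
next
  fix z w assume z: "z \<in> E" and w: "w \<in> E"
  obtain a b where ab: "z = (a, b)" by (cases z)
  obtain a' b' where ab': "w = (a', b')" by (cases w)
  have h: "\<forall>H\<in>A. br H a = - ((\<alpha> \<bullet> H) *\<^sub>R b) \<and> br H b = (\<alpha> \<bullet> H) *\<^sub>R a"
    "\<theta>1 (\<theta>2 a) = Re \<epsilon> *\<^sub>R a - Im \<epsilon> *\<^sub>R b" "\<theta>1 (\<theta>2 b) = Im \<epsilon> *\<^sub>R a + Re \<epsilon> *\<^sub>R b"
    using z ab memE by auto
  have h': "\<forall>H\<in>A. br H a' = - ((\<alpha> \<bullet> H) *\<^sub>R b') \<and> br H b' = (\<alpha> \<bullet> H) *\<^sub>R a'"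
    "\<theta>1 (\<theta>2 a') = Re \<epsilon> *\<^sub>R a' - Im \<epsilon> *\<^sub>R b'" "\<theta>1 (\<theta>2 b') = Im \<epsilon> *\<^sub>R a' + Re \<epsilon> *\<^sub>R b'"
    using w ab' memE by auto
  show "z + w \<in> E"
    unfolding ab ab' memE add_Pair
    using h(1) h'(1) by (simp add: h(2,3) h'(2,3) algebra_simps)
next
  fix r :: real and z assume z: "z \<in> E"
  obtain a b where ab: "z = (a, b)" by (cases z)
  have h: "\<forall>H\<in>A. br H a = - ((\<alpha> \<bullet> H) *\<^sub>R b) \<and> br H b = (\<alpha> \<bullet> H) *\<^sub>R a"
    "\<theta>1 (\<theta>2 a) = Re \<epsilon> *\<^sub>R a - Im \<epsilon> *\<^sub>R b" "\<theta>1 (\<theta>2 b) = Im \<epsilon> *\<^sub>R a + Re \<epsilon> *\<^sub>R b"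
    using z ab memE by auto
  show "r *\<^sub>R z \<in> E"
    unfolding ab memE scaleR_Pair
    using h(1) by (simp add: h(2,3) algebra_simps)
qed

lemma E_u: "(u, v) \<in> E \<Longrightarrow> u = (1 / c) *\<^sub>R br \<alpha> v"
  using alpha_A c_pos by (auto simp: memE c_def)
lemma E_v: "(u, v) \<in> E \<Longrightarrow> v = - (1 / c) *\<^sub>R br \<alpha> u"
proof -
  assume "(u, v) \<in> E"
  then have "br \<alpha> u = - (c *\<^sub>R v)" using alpha_A by (auto simp: memE c_def)
  then show ?thesis using c_pos by simp
qed

lemma eps_sq[simp]: "(Re \<epsilon>)\<^sup>2 + (Im \<epsilon>)\<^sup>2 = 1" using eps cmod_power2[of \<epsilon>] by simp

lemma inv_eps: "Re (inverse \<epsilon>) = Re \<epsilon>" "Im (inverse \<epsilon>) = - Im \<epsilon>"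
proof -
  have "Re \<epsilon> ^ 2 + Im \<epsilon> ^ 2 = 1" using eps cmod_power2[of \<epsilon>] by simp
  then show "Re (inverse \<epsilon>) = Re \<epsilon>" "Im (inverse \<epsilon>) = - Im \<epsilon>"
    by (simp_all add: power2_eq_square)
qed

lemma conj_E: "(u, v) \<in> E \<Longrightarrow> (u, - v) \<in> eps_root_space br \<theta>1 \<theta>2 A (- \<alpha>) (inverse \<epsilon>)"
  by (auto simp: eps_root_space_def root_space_def memE inv_eps)

lemma E_rot: "(u, v) \<in> E \<Longrightarrow> (- v, u) \<in> E"
  by (auto simp: memE algebra_simps)

lemma V_eq: "V = fst ` E"
proof
  show "V \<subseteq> fst ` E"
  proof
    fix x assume "x \<in> V"
    then obtain z1 z2 where z1: "z1 \<in> E" and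
      z2: "z2 \<in> eps_root_space br \<theta>1 \<theta>2 A (- \<alpha>) (inverse \<epsilon>)" and s: "z1 + z2 = (x, 0)"
      unfolding V_space_def by blast
    obtain u1 v1 where zz1: "z1 = (u1, v1)" by (cases z1)
    obtain u2 v2 where zz2: "z2 = (u2, v2)" by (cases z2)
    have s1: "u1 + u2 = x" "v1 + v2 = 0" using s zz1 zz2 by auto
    have "(u2, - v2) \<in> E"
      using z2 unfolding zz2 eps_root_space_def root_space_def memE
      by (simp add: inv_eps)
    moreover have "- v2 = v1" using s1(2) by (metis add_eq_0_iff2 minus_equation_iff neg_eq_iff_add_eq_0)
    ultimately have "(u2, v1) \<in> E" by simp
    then have "u2 = u1" using E_u z1 zz1 by metis
    then have x: "x = 2 *\<^sub>R u1" using s1(1) by (simp add: scaleR_2)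
    have "2 *\<^sub>R (u1, v1) \<in> E" using z1 zz1 E_sub subspace_scale by blast
    then have "(2 *\<^sub>R u1, 2 *\<^sub>R v1) \<in> E" by simp
    then show "x \<in> fst ` E" using x by force
  qed
next
  show "fst ` E \<subseteq> V"
  proof
    fix x assume "x \<in> fst ` E"
    then obtain v where z: "(x, v) \<in> E" by auto
    have "(1/2) *\<^sub>R (x, v) \<in> E" using z E_sub subspace_scale by blast
    then have z1: "((1/2) *\<^sub>R x, (1/2) *\<^sub>R v) \<in> E" by simp
    then have z2: "((1/2) *\<^sub>R x, - ((1/2) *\<^sub>R v)) \<in> eps_root_space br \<theta>1 \<theta>2 A (- \<alpha>) (inverse \<epsilon>)"
      by (rule conj_E)
    have sum: "((1/2) *\<^sub>R x, (1/2) *\<^sub>R v) + ((1/2) *\<^sub>R x, - ((1/2) *\<^sub>R v)) = (x, 0)"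
      by (simp add: scaleR_add_left[symmetric])
    show "x \<in> V" unfolding V_space_def mem_Collect_eq
      using z1 z2 sum by blast
  qed
qed

definition Yf where "Yf x = (1 / c) *\<^sub>R br \<alpha> x"

lemma Yf_lin: "linear Yf"
  unfolding Yf_def linear_iff by (simp add: scaleR_add_right)
lemma Yf_add[simp]: "Yf (x + y) = Yf x + Yf y" using Yf_lin by (rule linear_add)
lemma Yf_mul[simp]: "Yf (r *\<^sub>R x) = r *\<^sub>R Yf x" using Yf_lin by (rule linear_scale)
lemma Yf_0[simp]: "Yf 0 = 0" using Yf_lin by (rule linear_0)

lemma memV: "x \<in> V \<longleftrightarrow> (x, - Yf x) \<in> E"
proof
  assume "x \<in> V"
  then obtain v where z: "(x, v) \<in> E" using V_eq by auto
  then show "(x, - Yf x) \<in> E" using E_v[OF z] by (simp add: Yf_def)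
next
  assume "(x, - Yf x) \<in> E" then show "x \<in> V" using V_eq by force
qed

lemma V_sub: "subspace V"
  unfolding subspace_def
proof (intro conjI ballI allI)
  have "(0::'g\<times>'g) \<in> E" using E_sub subspace_0 by blast
  then show "0 \<in> V" unfolding memV by (simp add: zero_prod_def)
next
  fix x y assume "x \<in> V" "y \<in> V"
  then have "(x, - Yf x) + (y, - Yf y) \<in> E" using memV E_sub subspace_add by blast
  then show "x + y \<in> V" unfolding memV by simp
next
  fix r :: real and x assume "x \<in> V"
  then have "r *\<^sub>R (x, - Yf x) \<in> E" using memV E_sub subspace_scale by blast
  then show "r *\<^sub>R x \<in> V" unfolding memV by simp
qed

lemma V_br:
  assumes "x \<in> V" "H \<in> A"
  shows "br H x = (\<alpha> \<bullet> H) *\<^sub>R Yf x" "br H (Yf x) = - ((\<alpha> \<bullet> H) *\<^sub>R x)"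
proof -
  have h: "br H x = - ((\<alpha> \<bullet> H) *\<^sub>R (- Yf x))" "br H (- Yf x) = (\<alpha> \<bullet> H) *\<^sub>R x"
    using assms memV[of x] unfolding memE by blast+
  from h(1) show "br H x = (\<alpha> \<bullet> H) *\<^sub>R Yf x" by simp
  from h(2) show "br H (Yf x) = - ((\<alpha> \<bullet> H) *\<^sub>R x)" by (metis brr_neg minus_minus)
qed

lemma V_eps:
  assumes "x \<in> V"
  shows "\<theta>1 (\<theta>2 x) = Re \<epsilon> *\<^sub>R x + Im \<epsilon> *\<^sub>R Yf x"
    "\<theta>1 (\<theta>2 (Yf x)) = - (Im \<epsilon> *\<^sub>R x) + Re \<epsilon> *\<^sub>R Yf x"
proof -
  have h: "\<theta>1 (\<theta>2 x) = Re \<epsilon> *\<^sub>R x - Im \<epsilon> *\<^sub>R (- Yf x)"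
     "\<theta>1 (\<theta>2 (- Yf x)) = Im \<epsilon> *\<^sub>R x + Re \<epsilon> *\<^sub>R (- Yf x)"
    using assms memV[of x] unfolding memE by blast+
  from h(1) show "\<theta>1 (\<theta>2 x) = Re \<epsilon> *\<^sub>R x + Im \<epsilon> *\<^sub>R Yf x" by simp
  have "\<theta>1 (\<theta>2 (Yf x)) = - (Im \<epsilon> *\<^sub>R x + Re \<epsilon> *\<^sub>R (- Yf x))"
    using h(2) by (metis th1_neg th2_neg minus_minus)
  then show "\<theta>1 (\<theta>2 (Yf x)) = - (Im \<epsilon> *\<^sub>R x) + Re \<epsilon> *\<^sub>R Yf x" by simp
qed

lemma YfYf: "x \<in> V \<Longrightarrow> Yf (Yf x) = - x"
  using V_br(2)[OF _ alpha_A, of x] c_pos by (simp add: Yf_def c_def)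

lemma Yf_V: "x \<in> V \<Longrightarrow> Yf x \<in> V"
proof -
  assume x: "x \<in> V"
  then have "(Yf x, x) \<in> E" using E_rot[of x "- Yf x"] memV by simp
  then show ?thesis using V_eq by force
qed


lemma V_eps_inv:
  assumes x: "x \<in> V"
  shows "\<theta>2 (\<theta>1 x) = Re \<epsilon> *\<^sub>R x - Im \<epsilon> *\<^sub>R Yf x"
    "\<theta>2 (\<theta>1 (Yf x)) = Im \<epsilon> *\<^sub>R x + Re \<epsilon> *\<^sub>R Yf x"
proof -
  have "\<theta>1 (\<theta>2 (Re \<epsilon> *\<^sub>R x - Im \<epsilon> *\<^sub>R Yf x)) = Re \<epsilon> *\<^sub>R (Re \<epsilon> *\<^sub>R x + Im \<epsilon> *\<^sub>R Yf x) - Im \<epsilon> *\<^sub>R (- (Im \<epsilon> *\<^sub>R x) + Re \<epsilon> *\<^sub>R Yf x)"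
    by (simp add: V_eps[OF x])
  also have "\<dots> = ((Re \<epsilon>)\<^sup>2 + (Im \<epsilon>)\<^sup>2) *\<^sub>R x"
    by (simp add: algebra_simps power2_eq_square)
  finally have 1: "\<theta>1 (\<theta>2 (Re \<epsilon> *\<^sub>R x - Im \<epsilon> *\<^sub>R Yf x)) = x" by simp
  show "\<theta>2 (\<theta>1 x) = Re \<epsilon> *\<^sub>R x - Im \<epsilon> *\<^sub>R Yf x"
    by (subst 1[symmetric]) simp
  have "\<theta>1 (\<theta>2 (Im \<epsilon> *\<^sub>R x + Re \<epsilon> *\<^sub>R Yf x)) = Im \<epsilon> *\<^sub>R (Re \<epsilon> *\<^sub>R x + Im \<epsilon> *\<^sub>R Yf x) + Re \<epsilon> *\<^sub>R (- (Im \<epsilon> *\<^sub>R x) + Re \<epsilon> *\<^sub>R Yf x)"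
    by (simp add: V_eps[OF x])
  also have "\<dots> = ((Re \<epsilon>)\<^sup>2 + (Im \<epsilon>)\<^sup>2) *\<^sub>R Yf x"
    by (simp add: algebra_simps power2_eq_square)
  finally have 2: "\<theta>1 (\<theta>2 (Im \<epsilon> *\<^sub>R x + Re \<epsilon> *\<^sub>R Yf x)) = Yf x" by simp
  show "\<theta>2 (\<theta>1 (Yf x)) = Im \<epsilon> *\<^sub>R x + Re \<epsilon> *\<^sub>R Yf x"
    by (subst 2[symmetric]) simp
qed

lemma V_theta:
  assumes th: "lie_involution br \<theta>" and thA: "\<And>H. H \<in> A \<Longrightarrow> \<theta> H = - H"
    and comm: "\<And>z. \<theta>1 (\<theta>2 (\<theta> z)) = \<theta> (\<theta>2 (\<theta>1 z))"
    and x: "x \<in> V"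
  shows "\<theta> x \<in> V" "Yf (\<theta> x) = - \<theta> (Yf x)"
proof -
  have lin: "linear \<theta>" and invo: "\<And>z. \<theta> (\<theta> z) = z" and hom: "\<And>u v. \<theta> (br u v) = br (\<theta> u) (\<theta> v)"
    using th_facts[OF th] by auto
  have tadd: "\<And>u v. \<theta> (u + v) = \<theta> u + \<theta> v" using lin by (rule linear_add)
  have tmul: "\<And>r u. \<theta> (r *\<^sub>R u) = r *\<^sub>R \<theta> u" using lin by (rule linear_scale)
  have tneg: "\<And>u. \<theta> (- u) = - \<theta> u" using lin by (rule linear_neg)
  have tsub: "\<And>u v. \<theta> (u - v) = \<theta> u - \<theta> v" using lin by (rule linear_diff)
  have brH: "br H (\<theta> u) = - \<theta> (br H u)" if "H \<in> A" for H u
  proof -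
    have "\<theta> (br H u) = br (- H) (\<theta> u)" using hom thA[OF that] by simp
    then show ?thesis by simp
  qed
  show Y: "Yf (\<theta> x) = - \<theta> (Yf x)"
    unfolding Yf_def using brH[OF alpha_A] by (simp add: tmul)
  have "(\<theta> x, \<theta> (Yf x)) \<in> E"
    unfolding memE
  proof (intro conjI ballI)
    fix H assume H: "H \<in> A"
    show "br H (\<theta> x) = - ((\<alpha> \<bullet> H) *\<^sub>R \<theta> (Yf x))"
      using brH[OF H] V_br(1)[OF x H] by (simp add: tmul)
    show "br H (\<theta> (Yf x)) = (\<alpha> \<bullet> H) *\<^sub>R \<theta> x"
      using brH[OF H] V_br(2)[OF x H] by (simp add: tmul tneg)
  next
    show "\<theta>1 (\<theta>2 (\<theta> x)) = Re \<epsilon> *\<^sub>R \<theta> x - Im \<epsilon> *\<^sub>R \<theta> (Yf x)"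
      unfolding comm V_eps_inv[OF x] by (simp add: tsub tmul)
    show "\<theta>1 (\<theta>2 (\<theta> (Yf x))) = Im \<epsilon> *\<^sub>R \<theta> x + Re \<epsilon> *\<^sub>R \<theta> (Yf x)"
      unfolding comm V_eps_inv[OF x] by (simp add: tadd tmul)
  qed
  then show "\<theta> x \<in> V" using V_eq by force
qed

lemma V_theta1: "x \<in> V \<Longrightarrow> \<theta>1 x \<in> V \<and> Yf (\<theta>1 x) = - \<theta>1 (Yf x)"
  using V_theta[OF inv1] A_neg by auto
lemma V_theta2: "x \<in> V \<Longrightarrow> \<theta>2 x \<in> V \<and> Yf (\<theta>2 x) = - \<theta>2 (Yf x)"
  using V_theta[OF inv2] A_neg by auto

lemma inj_Yf: "inj_on Yf V"
proof (rule inj_onI)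
  fix x y assume "x \<in> V" "y \<in> V" "Yf x = Yf y"
  then have "Yf (Yf x) = Yf (Yf y)" by simp
  then show "x = y" using YfYf \<open>x \<in> V\<close> \<open>y \<in> V\<close> by simp
qed

lemma dim_EV: "dim E = dim V"
proof -
  have "inj_on fst (span E)"
    unfolding span_eq_iff[THEN iffD2, OF E_sub]
  proof (rule inj_onI)
    fix z w assume z: "z \<in> E" and w: "w \<in> E" and f: "fst z = fst w"
    obtain a b where ab: "z = (a, b)" by (cases z)
    obtain a' b' where ab': "w = (a', b')" by (cases w)
    have "a = a'" using f ab ab' by simp
    moreover have "b = - (1 / c) *\<^sub>R br \<alpha> a" using E_v z ab by blast
    moreover have "b' = - (1 / c) *\<^sub>R br \<alpha> a'" using E_v w ab' by blast
    ultimately show "z = w" using ab ab' by simp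
  qed
  then have "dim (fst ` E) = dim E" by (rule dim_image_eq[OF linear_fst])
  then show ?thesis using V_eq by simp
qed

lemma dims:
  assumes th: "lie_involution br \<theta>" and thA: "\<And>H. H \<in> A \<Longrightarrow> \<theta> H = - H"
    and thV: "\<And>x. x \<in> V \<Longrightarrow> \<theta> x \<in> V \<and> Yf (\<theta> x) = - \<theta> (Yf x)"
  shows "dim (V \<inter> fix_space \<theta>) = mult br \<theta>1 \<theta>2 A \<alpha> \<epsilon>"
    "dim (V \<inter> neg_space \<theta>) = mult br \<theta>1 \<theta>2 A \<alpha> \<epsilon>"
proof -
  have lin: "linear \<theta>" and invo: "\<And>z. \<theta> (\<theta> z) = z"
    using th_facts[OF th] by auto
  have tadd: "\<And>u v. \<theta> (u + v) = \<theta> u + \<theta> v" using lin by (rule linear_add)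
  have tmul: "\<And>r u. \<theta> (r *\<^sub>R u) = r *\<^sub>R \<theta> u" using lin by (rule linear_scale)
  have tneg: "\<And>u. \<theta> (- u) = - \<theta> u" using lin by (rule linear_neg)
  have tsub: "\<And>u v. \<theta> (u - v) = \<theta> u - \<theta> v" using lin by (rule linear_diff)
  have t0: "\<theta> 0 = 0" using lin by (rule linear_0)
  define K where "K = V \<inter> fix_space \<theta>"
  define M where "M = V \<inter> neg_space \<theta>"
  have sK: "subspace K" unfolding K_def fix_space_def
    by (intro subspace_inter V_sub) (auto simp: subspace_def tadd tmul t0)
  have sM: "subspace M" unfolding M_def neg_space_def
    by (intro subspace_inter V_sub) (auto simp: subspace_def tadd tmul t0)
  have KM: "K \<inter> M = {0}"
  proof
    show "K \<inter> M \<subseteq> {0}"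
    proof
      fix x assume "x \<in> K \<inter> M"
      then have "x = - x" by (auto simp: K_def M_def fix_space_def neg_space_def)
      then show "x \<in> {0}" by (simp add: eq_neg_iff_add_eq_0 flip: scaleR_2)
    qed
    show "{0} \<subseteq> K \<inter> M" using sK sM subspace_0 by blast
  qed
  have VKM: "{x + y |x y. x \<in> K \<and> y \<in> M} = V"
  proof
    show "{x + y |x y. x \<in> K \<and> y \<in> M} \<subseteq> V"
      using V_sub subspace_add by (auto simp: K_def M_def)
    show "V \<subseteq> {x + y |x y. x \<in> K \<and> y \<in> M}"
    proof
      fix x assume x: "x \<in> V"
      let ?k = "(1/2) *\<^sub>R (x + \<theta> x)" and ?m = "(1/2) *\<^sub>R (x - \<theta> x)"
      have "?k \<in> V" "?m \<in> V" using x thV[OF x] V_sub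
        by (auto intro!: subspace_scale subspace_add subspace_diff)
      moreover have "\<theta> ?k = ?k" "\<theta> ?m = - ?m" by (auto simp: tmul tadd tsub invo algebra_simps)
      moreover have "x = ?k + ?m" by (simp add: algebra_simps flip: scaleR_2)
      ultimately show "x \<in> {x + y |x y. x \<in> K \<and> y \<in> M}"
        unfolding K_def M_def fix_space_def neg_space_def by blast
    qed
  qed
  have d0: "dim {0::'g} = 0" by (metis dim_empty dim_span span_empty)
  have sumd: "dim V = dim K + dim M"
    using dim_sums_Int[OF sK sM] unfolding VKM KM d0 by simp
  have YKM: "Yf ` K \<subseteq> M"
  proof
    fix y assume "y \<in> Yf ` K"
    then obtain x where x: "x \<in> K" "y = Yf x" by auto
    then have xV: "x \<in> V" and tx: "\<theta> x = x" by (auto simp: K_def fix_space_def)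
    have "Yf (\<theta> x) = - \<theta> (Yf x)" using thV[OF xV] by blast
    then have "\<theta> (Yf x) = - Yf x" using tx by (metis minus_minus)
    then show "y \<in> M" using Yf_V[OF xV] x(2) by (auto simp: M_def neg_space_def)
  qed
  have YMK: "Yf ` M \<subseteq> K"
  proof
    fix y assume "y \<in> Yf ` M"
    then obtain x where x: "x \<in> M" "y = Yf x" by auto
    then have xV: "x \<in> V" and tx: "\<theta> x = - x" by (auto simp: M_def neg_space_def)
    have "Yf (\<theta> x) = - \<theta> (Yf x)" using thV[OF xV] by blast
    then have "\<theta> (Yf x) = Yf x" using tx Yf_lin by (metis minus_minus linear_neg)
    then show "y \<in> K" using Yf_V[OF xV] x(2) by (auto simp: K_def fix_space_def)
  qed
  have eK: "span K = K" using sK by simp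
  have eM: "span M = M" using sM by simp
  have "inj_on Yf (span K)" unfolding eK by (rule inj_on_subset[OF inj_Yf]) (auto simp: K_def)
  then have "dim (Yf ` K) = dim K" by (rule dim_image_eq[OF Yf_lin])
  then have 1: "dim K \<le> dim M" using dim_subset[OF YKM] by simp
  have "inj_on Yf (span M)" unfolding eM by (rule inj_on_subset[OF inj_Yf]) (auto simp: M_def)
  then have "dim (Yf ` M) = dim M" by (rule dim_image_eq[OF Yf_lin])
  then have 2: "dim M \<le> dim K" using dim_subset[OF YMK] by simp
  have "mult br \<theta>1 \<theta>2 A \<alpha> \<epsilon> = dim V div 2" by (simp add: mult_def dim_EV)
  then show "dim (V \<inter> fix_space \<theta>) = mult br \<theta>1 \<theta>2 A \<alpha> \<epsilon>"
    "dim (V \<inter> neg_space \<theta>) = mult br \<theta>1 \<theta>2 A \<alpha> \<epsilon>"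
    using sumd 1 2 by (simp_all add: K_def M_def)
qed


lemma neg_sub: "lie_involution br \<theta> \<Longrightarrow> subspace (neg_space \<theta>)"
proof -
  assume "lie_involution br \<theta>"
  then have lin: "linear \<theta>" using th_facts by blast
  show ?thesis unfolding neg_space_def subspace_def
    using linear_add[OF lin] linear_scale[OF lin] linear_0[OF lin] by auto
qed

lemma ker_l: "subspace {x. br x y = 0}"
  unfolding subspace_def by auto
lemma ker_r: "subspace {y. br x y = 0}"
  unfolding subspace_def by auto

lemma abelian_span:
  assumes "\<forall>s\<in>S. \<forall>t\<in>S. br s t = 0" "x \<in> span S" "y \<in> span S"
  shows "br x y = 0"
proof -
  have 1: "\<forall>s\<in>S. br s y = 0"
  proof
    fix s assume "s \<in> S"
    then have "S \<subseteq> {y. br s y = 0}" using assms(1) by auto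
    then have "span S \<subseteq> {y. br s y = 0}" by (rule span_minimal[OF _ ker_r])
    then show "br s y = 0" using assms(3) by auto
  qed
  then have "S \<subseteq> {x. br x y = 0}" by auto
  then have "span S \<subseteq> {x. br x y = 0}" by (rule span_minimal[OF _ ker_l])
  then show ?thesis using assms(2) by auto
qed

lemma Yf_inner: "x \<in> V \<Longrightarrow> x' \<in> V \<Longrightarrow> Yf x \<bullet> Yf x' = x \<bullet> x'"
proof -
  assume x: "x \<in> V" and x': "x' \<in> V"
  have "Yf x \<bullet> Yf x' = (1 / c) * (br \<alpha> x \<bullet> Yf x')" by (simp add: Yf_def)
  also have "br \<alpha> x \<bullet> Yf x' = - (x \<bullet> br \<alpha> (Yf x'))" by (rule skew)
  also have "br \<alpha> (Yf x') = - (c *\<^sub>R x')" using V_br(2)[OF x' alpha_A] by (simp add: c_def)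
  finally show ?thesis using c_pos by simp
qed

lemma Yf_X_inner: "x \<bullet> Yf x' = - (Yf x \<bullet> x')"
  unfolding Yf_def using skew[of \<alpha> x x'] by simp

lemma brXY:
  assumes x: "x \<in> V" and t1: "\<theta>1 x = x"
  shows "br x (Yf x) = (x \<bullet> x) *\<^sub>R \<alpha>"
proof -
  define y where "y = Yf x"
  define w where "w = br x y"
  have "Yf (\<theta>1 x) = - \<theta>1 (Yf x)" using V_theta1[OF x] by blast
  then have "Yf x = - \<theta>1 (Yf x)" using t1 by simp
  then have t1y: "\<theta>1 y = - y" unfolding y_def by (metis minus_minus)
  have t1w: "\<theta>1 w = - w" unfolding w_def th1_br t1 t1y by simp
  have t2x: "\<theta>2 x = Re \<epsilon> *\<^sub>R x - Im \<epsilon> *\<^sub>R y"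
    using V_eps_inv(1)[OF x] t1 unfolding y_def by simp
  have "\<theta>2 (\<theta>1 y) = Im \<epsilon> *\<^sub>R x + Re \<epsilon> *\<^sub>R y"
    using V_eps_inv(2)[OF x] unfolding y_def by simp
  then have "- \<theta>2 y = Im \<epsilon> *\<^sub>R x + Re \<epsilon> *\<^sub>R y" unfolding t1y th2_neg .
  then have "\<theta>2 y = - (Im \<epsilon> *\<^sub>R x + Re \<epsilon> *\<^sub>R y)" by (metis minus_minus)
  then have t2y: "\<theta>2 y = - (Im \<epsilon> *\<^sub>R x) - Re \<epsilon> *\<^sub>R y" by simp
  have yx: "br y x = - w" unfolding w_def by (rule anti)
  have "\<theta>2 w = br (Re \<epsilon> *\<^sub>R x - Im \<epsilon> *\<^sub>R y) (- (Im \<epsilon> *\<^sub>R x) - Re \<epsilon> *\<^sub>R y)"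
    unfolding w_def th2_br t2x t2y ..
  also have "\<dots> = - (((Re \<epsilon>)\<^sup>2 + (Im \<epsilon>)\<^sup>2) *\<^sub>R w)"
    by (simp add: yx w_def[symmetric] algebra_simps power2_eq_square)
  finally have t2w: "\<theta>2 w = - w" by simp
  have comm: "br H w = 0" if H: "H \<in> A" for H
  proof -
    have j: "br H (br x y) + br x (br y H) + br y (br H x) = 0" by (rule jac)
    have "br y H = (\<alpha> \<bullet> H) *\<^sub>R x" using V_br(2)[OF x H] anti[of y H] unfolding y_def by simp
    moreover have "br H x = (\<alpha> \<bullet> H) *\<^sub>R y" using V_br(1)[OF x H] unfolding y_def by simp
    ultimately show ?thesis using j unfolding w_def by simp
  qed
  define B where "B = span (insert w A)"
  have "B = A"
  proof (rule A_max)
    show "subspace B" unfolding B_def by (rule subspace_span)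
    show "A \<subseteq> B" unfolding B_def by (meson span_superset subset_insertI subset_trans)
    have "insert w A \<subseteq> neg_space \<theta>1 \<inter> neg_space \<theta>2"
      using A_neg t1w t2w by (auto simp: neg_space_def)
    then show "B \<subseteq> neg_space \<theta>1 \<inter> neg_space \<theta>2" unfolding B_def
      by (rule span_minimal) (intro subspace_inter neg_sub inv1 inv2)
    have "\<forall>s\<in>insert w A. \<forall>t\<in>insert w A. br s t = 0"
    proof (intro ballI)
      fix s t assume s: "s \<in> insert w A" and t: "t \<in> insert w A"
      show "br s t = 0"
      proof (cases "s = w")
        case True
        show ?thesis
        proof (cases "t = w")
          case True then show ?thesis using \<open>s = w\<close> by simp
        next
          case False
          then have "t \<in> A" using t by simp
          then have "br t w = 0" by (rule comm)
          then show ?thesis using anti[of s t] \<open>s = w\<close> by simp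
        qed
      next
        case False
        then have sA: "s \<in> A" using s by simp
        show ?thesis
        proof (cases "t = w")
          case True then show ?thesis using comm[OF sA] by simp
        next
          case False
          then have "t \<in> A" using t by simp
          then show ?thesis using A_ab[OF sA] by simp
        qed
      qed
    qed
    then show "\<forall>x\<in>B. \<forall>y\<in>B. br x y = 0" unfolding B_def using abelian_span by blast
  qed
  moreover have "w \<in> B" unfolding B_def by (rule span_base) simp
  ultimately have wA: "w \<in> A" by simp
  have wH: "w \<bullet> H = (x \<bullet> x) * (\<alpha> \<bullet> H)" if H: "H \<in> A" for H
  proof -
    have 1: "w \<bullet> H = - (y \<bullet> br x H)" unfolding w_def by (rule skew)
    have 2: "br x H = - ((\<alpha> \<bullet> H) *\<^sub>R y)" using V_br(1)[OF x H] anti[of x H] unfolding y_def by simp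
    have 3: "y \<bullet> y = x \<bullet> x" unfolding y_def using Yf_inner[OF x x] .
    show ?thesis unfolding 1 2 by (simp add: 3 mult.commute)
  qed
  define d where "d = w - (x \<bullet> x) *\<^sub>R \<alpha>"
  have dA: "d \<in> A" unfolding d_def using wA alpha_A A_sub
    by (intro subspace_diff subspace_scale) auto
  have "d \<bullet> d = 0" using wH[OF dA] by (simp add: d_def inner_diff_left)
  then have "d = 0" by simp
  then show ?thesis unfolding d_def w_def y_def by simp
qed

lemma brXY_rot:
  "br (cos b *\<^sub>R x - sin b *\<^sub>R Yf x) (Yf (cos b *\<^sub>R x - sin b *\<^sub>R Yf x)) = br x (Yf x)"
  if x: "x \<in> V" for b
proof -
  have "Yf (cos b *\<^sub>R x - sin b *\<^sub>R Yf x) = cos b *\<^sub>R Yf x + sin b *\<^sub>R x"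
    using YfYf[OF x] Yf_lin by (simp add: linear_diff)
  moreover have "br (Yf x) x = - br x (Yf x)" by (rule anti)
  ultimately have "br (cos b *\<^sub>R x - sin b *\<^sub>R Yf x) (Yf (cos b *\<^sub>R x - sin b *\<^sub>R Yf x))
     = (cos b * cos b) *\<^sub>R br x (Yf x) + (sin b * sin b) *\<^sub>R br x (Yf x)"
    by (simp add: algebra_simps)
  also have "\<dots> = br x (Yf x)"
    by (simp only: scaleR_add_left[symmetric] sin_cos_squared_add3 scaleR_one)
  finally show ?thesis .
qed

lemma rot:
  assumes x: "x \<in> V" and H: "H \<in> A"
  shows "Ad_exp br H x = cos (\<alpha> \<bullet> H) *\<^sub>R x + sin (\<alpha> \<bullet> H) *\<^sub>R Yf x"
    "Ad_exp br H (Yf x) = - (sin (\<alpha> \<bullet> H) *\<^sub>R x) + cos (\<alpha> \<bullet> H) *\<^sub>R Yf x"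
proof -
  show "Ad_exp br H x = cos (\<alpha> \<bullet> H) *\<^sub>R x + sin (\<alpha> \<bullet> H) *\<^sub>R Yf x"
    unfolding Ad_exp_expo by (rule expo_rot[OF lin_br V_br(1)[OF x H] V_br(2)[OF x H]])
  have "br H (- x) = - ((\<alpha> \<bullet> H) *\<^sub>R Yf x)" using V_br(1)[OF x H] by simp
  moreover have "br H (Yf x) = (\<alpha> \<bullet> H) *\<^sub>R (- x)" using V_br(2)[OF x H] by simp
  ultimately have "expo (br H) (Yf x) = cos (\<alpha> \<bullet> H) *\<^sub>R Yf x + sin (\<alpha> \<bullet> H) *\<^sub>R (- x)"
    using expo_rot[OF lin_br] by blast
  then show "Ad_exp br H (Yf x) = - (sin (\<alpha> \<bullet> H) *\<^sub>R x) + cos (\<alpha> \<bullet> H) *\<^sub>R Yf x"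
    unfolding Ad_exp_expo by simp
qed

lemma BI:
  assumes "\<forall>i<m. X i \<in> V \<and> br (X i) (Yf (X i)) = \<alpha>"
  shows "bracket_identities br A \<alpha> m X (\<lambda>i. Yf (X i))"
  unfolding bracket_identities_def
proof (intro ballI allI impI conjI)
  fix H i assume H: "H \<in> A" and i: "i < m"
  have x: "X i \<in> V" and b: "br (X i) (Yf (X i)) = \<alpha>" using assms i by auto
  show "br H (X i) = (\<alpha> \<bullet> H) *\<^sub>R Yf (X i)" by (rule V_br(1)[OF x H])
  show "br H (Yf (X i)) = - ((\<alpha> \<bullet> H) *\<^sub>R X i)" by (rule V_br(2)[OF x H])
  show "br (X i) (Yf (X i)) = \<alpha>" by (rule b)
  show "Ad_exp br H (X i) = cos (\<alpha> \<bullet> H) *\<^sub>R X i + sin (\<alpha> \<bullet> H) *\<^sub>R Yf (X i)" by (rule rot(1)[OF x H])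
  show "Ad_exp br H (Yf (X i)) = - (sin (\<alpha> \<bullet> H) *\<^sub>R X i) + cos (\<alpha> \<bullet> H) *\<^sub>R Yf (X i)" by (rule rot(2)[OF x H])
qed

lemma ONB:
  assumes W: "subspace W" and d: "dim W = m" and Z: "\<forall>i<m. Z i \<in> W"
    and on: "\<forall>i<m. \<forall>j<m. Z i \<bullet> Z j = (if i = j then 1 else 0)"
  shows "orthonormal_basis_of W m Z"
proof -
  have inj: "inj_on Z {..<m}"
  proof (rule inj_onI)
    fix i j assume i: "i \<in> {..<m}" and j: "j \<in> {..<m}" and e: "Z i = Z j"
    show "i = j"
    proof (rule ccontr)
      assume "i \<noteq> j"
      then have "Z i \<bullet> Z j = 0" using on i j by auto
      moreover have "Z i \<bullet> Z j = 1" using e on j by auto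
      ultimately show False by simp
    qed
  qed
  have po: "pairwise orthogonal (Z ` {..<m})"
    unfolding pairwise_def orthogonal_def using on by auto
  have nz: "0 \<notin> Z ` {..<m}"
  proof
    assume "0 \<in> Z ` {..<m}"
    then obtain i where "i < m" "Z i = 0" by auto
    then show False using on by force
  qed
  have ind: "independent (Z ` {..<m})" by (rule pairwise_orthogonal_independent[OF po nz])
  have card: "card (Z ` {..<m}) = m" using card_image[OF inj] by simp
  have sub: "Z ` {..<m} \<subseteq> W" using Z by auto
  have "W \<subseteq> span (Z ` {..<m})"
    by (rule card_ge_dim_independent[OF sub ind]) (simp add: card d)
  moreover have "span (Z ` {..<m}) \<subseteq> W" by (rule span_minimal[OF sub W])
  ultimately show ?thesis unfolding orthonormal_basis_of_def using Z on by auto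
qed


lemma fix_sub: "lie_involution br \<theta> \<Longrightarrow> subspace (fix_space \<theta>)"
proof -
  assume "lie_involution br \<theta>"
  then have lin: "linear \<theta>" using th_facts by blast
  show ?thesis unfolding fix_space_def subspace_def
    using linear_add[OF lin] linear_scale[OF lin] linear_0[OF lin] by auto
qed

lemma phi_cis: "\<epsilon> = cis (2 * phi_eps \<epsilon>)"
proof -
  define p where "p = Arg \<epsilon> / 2"
  have nz: "\<epsilon> \<noteq> 0" using eps by auto
  have P: "- (pi / 2) < p \<and> p \<le> pi / 2 \<and> \<epsilon> = cis (2 * p)"
  proof (intro conjI)
    show "- (pi / 2) < p" using mpi_less_Arg[of \<epsilon>] by (simp add: p_def)
    show "p \<le> pi / 2" using Arg_le_pi[of \<epsilon>] by (simp add: p_def)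
    have "rcis (cmod \<epsilon>) (Arg \<epsilon>) = \<epsilon>" by (rule rcis_cmod_Arg)
    then show "\<epsilon> = cis (2 * p)" using eps by (simp add: p_def rcis_def)
  qed
  have U: "q = p" if q: "- (pi / 2) < q \<and> q \<le> pi / 2 \<and> \<epsilon> = cis (2 * q)" for q
  proof -
    have "\<epsilon> = rcis 1 (2 * q)" using q by (simp add: rcis_def)
    then have "Arg \<epsilon> = 2 * q" by (intro Arg_unique'[of 1]) (use q in auto)
    then show ?thesis by (simp add: p_def)
  qed
  have "phi_eps \<epsilon> = p" unfolding phi_eps_def
    by (rule the_equality) (use P U in blast)+
  then show ?thesis using P by simp
qed

lemma phi_re: "Re \<epsilon> = cos (2 * phi_eps \<epsilon>)" and phi_im: "Im \<epsilon> = sin (2 * phi_eps \<epsilon>)"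
  using arg_cong[OF phi_cis, of Re] arg_cong[OF phi_cis, of Im] by simp_all

lemma t2_on_K1:
  assumes x: "x \<in> V" and t1: "\<theta>1 x = x"
  shows "\<theta>2 x = Re \<epsilon> *\<^sub>R x - Im \<epsilon> *\<^sub>R Yf x"
    "\<theta>2 (Yf x) = - (Im \<epsilon> *\<^sub>R x) - Re \<epsilon> *\<^sub>R Yf x"
    "\<theta>1 (Yf x) = - Yf x"
proof -
  have "Yf (\<theta>1 x) = - \<theta>1 (Yf x)" using V_theta1[OF x] by blast
  then have "Yf x = - \<theta>1 (Yf x)" using t1 by simp
  then show t1y: "\<theta>1 (Yf x) = - Yf x" by (metis minus_minus)
  show "\<theta>2 x = Re \<epsilon> *\<^sub>R x - Im \<epsilon> *\<^sub>R Yf x"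
    using V_eps_inv(1)[OF x] t1 by simp
  have "\<theta>2 (\<theta>1 (Yf x)) = Im \<epsilon> *\<^sub>R x + Re \<epsilon> *\<^sub>R Yf x"
    using V_eps_inv(2)[OF x] by simp
  then have "- \<theta>2 (Yf x) = Im \<epsilon> *\<^sub>R x + Re \<epsilon> *\<^sub>R Yf x" unfolding t1y th2_neg .
  then have "\<theta>2 (Yf x) = - (Im \<epsilon> *\<^sub>R x + Re \<epsilon> *\<^sub>R Yf x)" by (metis minus_minus)
  then show "\<theta>2 (Yf x) = - (Im \<epsilon> *\<^sub>R x) - Re \<epsilon> *\<^sub>R Yf x" by simp
qed

lemma onb_cong: "(\<And>i. i < m \<Longrightarrow> f i = g i) \<Longrightarrow> orthonormal_basis_of W m f \<Longrightarrow> orthonormal_basis_of W m g"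
proof -
  assume e: "\<And>i. i < m \<Longrightarrow> f i = g i" and o: "orthonormal_basis_of W m f"
  have "f ` {..<m} = g ` {..<m}" using e by (auto intro!: image_cong)
  then show ?thesis using o e unfolding orthonormal_basis_of_def by auto
qed

lemma bi_cong: "(\<And>i. i < m \<Longrightarrow> f i = g i) \<Longrightarrow> (\<And>i. i < m \<Longrightarrow> f' i = g' i) \<Longrightarrow>
  bracket_identities br A \<alpha> m f f' \<Longrightarrow> bracket_identities br A \<alpha> m g g'"
  unfolding bracket_identities_def by auto

lemma main:
  shows "\<exists>X Y.
    orthonormal_basis_of (V \<inter> fix_space \<theta>1) (mult br \<theta>1 \<theta>2 A \<alpha> \<epsilon>) X \<and>
    orthonormal_basis_of (V \<inter> neg_space \<theta>1) (mult br \<theta>1 \<theta>2 A \<alpha> \<epsilon>) Y \<and>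
    bracket_identities br A \<alpha> (mult br \<theta>1 \<theta>2 A \<alpha> \<epsilon>) X Y \<and>
    (\<forall>H\<epsilon>\<in>A. \<alpha> \<bullet> H\<epsilon> = phi_eps \<epsilon> \<longrightarrow>
       orthonormal_basis_of (V \<inter> fix_space \<theta>2) (mult br \<theta>1 \<theta>2 A \<alpha> \<epsilon>)
         (\<lambda>i. inv (Ad_exp br H\<epsilon>) (X i)) \<and>
       orthonormal_basis_of (V \<inter> neg_space \<theta>2) (mult br \<theta>1 \<theta>2 A \<alpha> \<epsilon>)
         (\<lambda>i. inv (Ad_exp br H\<epsilon>) (Y i)) \<and>
       bracket_identities br A \<alpha> (mult br \<theta>1 \<theta>2 A \<alpha> \<epsilon>)
         (\<lambda>i. inv (Ad_exp br H\<epsilon>) (X i)) (\<lambda>i. inv (Ad_exp br H\<epsilon>) (Y i)))"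
proof -
  define m where "m = mult br \<theta>1 \<theta>2 A \<alpha> \<epsilon>"
  have A1: "\<And>H. H \<in> A \<Longrightarrow> \<theta>1 H = - H" and A2: "\<And>H. H \<in> A \<Longrightarrow> \<theta>2 H = - H"
    using A_neg by auto
  have dK1: "dim (V \<inter> fix_space \<theta>1) = m" and dM1: "dim (V \<inter> neg_space \<theta>1) = m"
    using dims[OF inv1 A1 V_theta1] by (simp_all add: m_def)
  have dK2: "dim (V \<inter> fix_space \<theta>2) = m" and dM2: "dim (V \<inter> neg_space \<theta>2) = m"
    using dims[OF inv2 A2 V_theta2] by (simp_all add: m_def)
  have sK1: "subspace (V \<inter> fix_space \<theta>1)" by (intro subspace_inter V_sub fix_sub inv1)
  have sM1: "subspace (V \<inter> neg_space \<theta>1)" by (intro subspace_inter V_sub neg_sub inv1)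
  have sK2: "subspace (V \<inter> fix_space \<theta>2)" by (intro subspace_inter V_sub fix_sub inv2)
  have sM2: "subspace (V \<inter> neg_space \<theta>2)" by (intro subspace_inter V_sub neg_sub inv2)
  obtain B where B: "B \<subseteq> V \<inter> fix_space \<theta>1" "pairwise orthogonal B"
    "\<And>x. x \<in> B \<Longrightarrow> norm x = 1" "independent B" "card B = m" "span B = V \<inter> fix_space \<theta>1"
    using orthonormal_basis_subspace[OF sK1] dK1 by metis
  have fB: "finite B" using B(4) by (rule independent_imp_finite)
  obtain X where bX: "bij_betw X {0..<m} B" using ex_bij_betw_nat_finite[OF fB] B(5) by metis
  have XB: "X i \<in> B" if "i < m" for i using bX that by (auto simp: bij_betw_def)
  have Xim: "X ` {..<m} = B" using bX by (simp add: bij_betw_def atLeast0LessThan)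
  have Xinj: "inj_on X {..<m}" using bX by (simp add: bij_betw_def atLeast0LessThan)
  have Xon: "\<forall>i<m. \<forall>j<m. X i \<bullet> X j = (if i = j then 1 else 0)"
  proof (intro allI impI)
    fix i j assume i: "i < m" and j: "j < m"
    show "X i \<bullet> X j = (if i = j then 1 else 0)"
    proof (cases "i = j")
      case True
      then show ?thesis using B(3)[OF XB[OF i]] by (simp add: norm_eq_1)
    next
      case False
      then have "X i \<noteq> X j" using Xinj i j by (auto simp: inj_on_def)
      then have "orthogonal (X i) (X j)" using B(2) XB[OF i] XB[OF j] by (auto simp: pairwise_def)
      then show ?thesis using False by (simp add: orthogonal_def)
    qed
  qed
  have XK: "X i \<in> V" "\<theta>1 (X i) = X i" if "i < m" for i
    using B(1) XB[OF that] by (auto simp: fix_space_def)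
  have Xn: "X i \<bullet> X i = 1" if "i < m" for i using Xon that by simp
  define Y where "Y i = Yf (X i)" for i
  have ONBX: "orthonormal_basis_of (V \<inter> fix_space \<theta>1) m X"
    unfolding orthonormal_basis_of_def using XB B(1) Xon Xim B(6) by auto
  have ONBY: "orthonormal_basis_of (V \<inter> neg_space \<theta>1) m Y"
  proof (rule ONB[OF sM1 dM1])
    show "\<forall>i<m. Y i \<in> V \<inter> neg_space \<theta>1"
      using XK Yf_V t2_on_K1(3) by (auto simp: Y_def neg_space_def)
    show "\<forall>i<m. \<forall>j<m. Y i \<bullet> Y j = (if i = j then 1 else 0)"
      using Xon XK Yf_inner by (simp add: Y_def)
  qed
  have brX: "br (X i) (Yf (X i)) = \<alpha>" if "i < m" for i
    using brXY[OF XK[OF that]] Xn[OF that] by simp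
  have BIX: "bracket_identities br A \<alpha> m X Y"
    unfolding Y_def by (rule BI) (use XK brX in auto)
  have part2: "orthonormal_basis_of (V \<inter> fix_space \<theta>2) m (\<lambda>i. inv (Ad_exp br H\<epsilon>) (X i)) \<and>
       orthonormal_basis_of (V \<inter> neg_space \<theta>2) m (\<lambda>i. inv (Ad_exp br H\<epsilon>) (Y i)) \<and>
       bracket_identities br A \<alpha> m (\<lambda>i. inv (Ad_exp br H\<epsilon>) (X i)) (\<lambda>i. inv (Ad_exp br H\<epsilon>) (Y i))"
    if H: "H\<epsilon> \<in> A" and Hb: "\<alpha> \<bullet> H\<epsilon> = phi_eps \<epsilon>" for H\<epsilon>
  proof -
    define b where "b = phi_eps \<epsilon>"
    define Xt where "Xt i = cos b *\<^sub>R X i - sin b *\<^sub>R Yf (X i)" for i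
    have XtV: "Xt i \<in> V" if "i < m" for i
      unfolding Xt_def using XK[OF that] Yf_V V_sub
      by (intro subspace_diff subspace_scale) auto
    have YXt: "Yf (Xt i) = cos b *\<^sub>R Yf (X i) + sin b *\<^sub>R X i" if "i < m" for i
      unfolding Xt_def using YfYf[OF XK(1)[OF that]] Yf_lin by (simp add: linear_diff)
    have sc: "(cos b * cos b) *\<^sub>R v + (sin b * sin b) *\<^sub>R v = v" for v :: 'g
      by (simp only: scaleR_add_left[symmetric] sin_cos_squared_add3 scaleR_one)
    have injA: "inj (Ad_exp br H\<epsilon>)" unfolding Ad_exp_expo by (rule expo_inj[OF lin_br skew])
    have AdXt: "Ad_exp br H\<epsilon> (Xt i) = X i" if "i < m" for i
    proof -
      have "Ad_exp br H\<epsilon> (Xt i) = cos b *\<^sub>R Xt i + sin b *\<^sub>R Yf (Xt i)"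
        using rot(1)[OF XtV[OF that] H] Hb by (simp add: b_def)
      also have "\<dots> = cos b *\<^sub>R Xt i + sin b *\<^sub>R (cos b *\<^sub>R Yf (X i) + sin b *\<^sub>R X i)"
        by (simp only: YXt[OF that])
      also have "\<dots> = (cos b * cos b) *\<^sub>R X i + (sin b * sin b) *\<^sub>R X i"
        unfolding Xt_def by (simp add: algebra_simps)
      finally show ?thesis using sc by simp
    qed
    have AdYt: "Ad_exp br H\<epsilon> (Yf (Xt i)) = Y i" if "i < m" for i
    proof -
      have "Ad_exp br H\<epsilon> (Yf (Xt i)) = - (sin b *\<^sub>R Xt i) + cos b *\<^sub>R Yf (Xt i)"
        using rot(2)[OF XtV[OF that] H] Hb by (simp add: b_def)
      also have "\<dots> = - (sin b *\<^sub>R Xt i) + cos b *\<^sub>R (cos b *\<^sub>R Yf (X i) + sin b *\<^sub>R X i)"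
        by (simp only: YXt[OF that])
      also have "\<dots> = (cos b * cos b) *\<^sub>R Y i + (sin b * sin b) *\<^sub>R Y i"
        unfolding Xt_def Y_def by (simp add: algebra_simps)
      finally show ?thesis using sc by simp
    qed
    have invX: "inv (Ad_exp br H\<epsilon>) (X i) = Xt i" if "i < m" for i
      using inv_f_f[OF injA, of "Xt i"] AdXt[OF that] by simp
    have invY: "inv (Ad_exp br H\<epsilon>) (Y i) = Yf (Xt i)" if "i < m" for i
      using inv_f_f[OF injA, of "Yf (Xt i)"] AdYt[OF that] by simp
    have c1: "cos b * Re \<epsilon> + sin b * Im \<epsilon> = cos b"
      using cos_diff[of "2 * b" b] by (simp add: phi_re phi_im b_def mult.commute)
    have c2: "sin b * Re \<epsilon> - cos b * Im \<epsilon> = - sin b"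
      using sin_diff[of b "2 * b"] by (simp add: phi_re phi_im b_def mult.commute)
    have t2Xt: "\<theta>2 (Xt i) = Xt i" if "i < m" for i
    proof -
      have "\<theta>2 (Xt i) = (cos b * Re \<epsilon> + sin b * Im \<epsilon>) *\<^sub>R X i + (sin b * Re \<epsilon> - cos b * Im \<epsilon>) *\<^sub>R Yf (X i)"
        unfolding Xt_def by (simp add: t2_on_K1(1,2)[OF XK[OF that]] algebra_simps)
      then show ?thesis unfolding c1 c2 Xt_def by simp
    qed
    have t2Yt: "\<theta>2 (Yf (Xt i)) = - Yf (Xt i)" if "i < m" for i
    proof -
      have "Yf (\<theta>2 (Xt i)) = - \<theta>2 (Yf (Xt i))" using V_theta2[OF XtV[OF that]] by blast
      then have "Yf (Xt i) = - \<theta>2 (Yf (Xt i))" using t2Xt[OF that] by simp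
      then show ?thesis by (metis minus_minus)
    qed
    have Xton: "Xt i \<bullet> Xt j = X i \<bullet> X j" if "i < m" "j < m" for i j
    proof -
      have 1: "Yf (X i) \<bullet> Yf (X j) = X i \<bullet> X j" using Yf_inner XK that by blast
      have 2: "X i \<bullet> Yf (X j) = - (Yf (X i) \<bullet> X j)" by (rule Yf_X_inner)
      have "Xt i \<bullet> Xt j = (cos b * cos b) * (X i \<bullet> X j) + (sin b * sin b) * (X i \<bullet> X j)"
        unfolding Xt_def by (simp add: inner_diff_left inner_diff_right 1 2 algebra_simps)
      also have "\<dots> = X i \<bullet> X j" by (simp only: distrib_right[symmetric] sin_cos_squared_add3 mult_1)
      finally show ?thesis .
    qed
    have ONBXt: "orthonormal_basis_of (V \<inter> fix_space \<theta>2) m Xt"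
    proof (rule ONB[OF sK2 dK2])
      show "\<forall>i<m. Xt i \<in> V \<inter> fix_space \<theta>2" using XtV t2Xt by (auto simp: fix_space_def)
      show "\<forall>i<m. \<forall>j<m. Xt i \<bullet> Xt j = (if i = j then 1 else 0)" using Xton Xon by simp
    qed
    have ONBYt: "orthonormal_basis_of (V \<inter> neg_space \<theta>2) m (\<lambda>i. Yf (Xt i))"
    proof (rule ONB[OF sM2 dM2])
      show "\<forall>i<m. Yf (Xt i) \<in> V \<inter> neg_space \<theta>2" using XtV t2Yt Yf_V by (auto simp: neg_space_def)
      show "\<forall>i<m. \<forall>j<m. Yf (Xt i) \<bullet> Yf (Xt j) = (if i = j then 1 else 0)"
        using Xton Xon Yf_inner XtV by simp
    qed
    have BIt: "bracket_identities br A \<alpha> m Xt (\<lambda>i. Yf (Xt i))"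
    proof (rule BI, intro allI impI conjI)
      fix i assume i: "i < m"
      show "Xt i \<in> V" by (rule XtV[OF i])
      show "br (Xt i) (Yf (Xt i)) = \<alpha>" unfolding Xt_def using brXY_rot[OF XK(1)[OF i]] brX[OF i] by simp
    qed
    show ?thesis
    proof (intro conjI)
      show "orthonormal_basis_of (V \<inter> fix_space \<theta>2) m (\<lambda>i. inv (Ad_exp br H\<epsilon>) (X i))"
        by (rule onb_cong[OF _ ONBXt]) (simp add: invX)
      show "orthonormal_basis_of (V \<inter> neg_space \<theta>2) m (\<lambda>i. inv (Ad_exp br H\<epsilon>) (Y i))"
        by (rule onb_cong[OF _ ONBYt]) (simp add: invY)
      show "bracket_identities br A \<alpha> m (\<lambda>i. inv (Ad_exp br H\<epsilon>) (X i)) (\<lambda>i. inv (Ad_exp br H\<epsilon>) (Y i))"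
        by (rule bi_cong[OF _ _ BIt]) (simp_all add: invX invY)
    qed
  qed
  show ?thesis unfolding m_def[symmetric]
    using ONBX ONBY BIX part2 by blast
qed

end

theorem lemma2p3:
  fixes br :: "'g::euclidean_space \<Rightarrow> 'g \<Rightarrow> 'g"
    and \<theta>1 \<theta>2 :: "'g \<Rightarrow> 'g" and l :: nat and A P :: "'g set"
    and \<epsilon> :: complex and \<alpha> :: 'g
  assumes "lie_algebra br" and "semisimple br" and "ad_invariant_inner br"
    and "lie_involution br \<theta>1" and "lie_involution br \<theta>2"
    and "l > 0" and "(\<theta>1 \<circ> \<theta>2) ^^ l = id"
    and "max_abelian br (neg_space \<theta>1 \<inter> neg_space \<theta>2) A"
    and "positive_system br A P"
    and "cmod \<epsilon> = 1"
    and "\<alpha> \<in> Sigma_eps br \<theta>1 \<theta>2 A \<epsilon> \<inter> P"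
  shows "\<exists>X Y.
    orthonormal_basis_of (V_space br \<theta>1 \<theta>2 A \<alpha> \<epsilon> \<inter> fix_space \<theta>1) (mult br \<theta>1 \<theta>2 A \<alpha> \<epsilon>) X \<and>
    orthonormal_basis_of (V_space br \<theta>1 \<theta>2 A \<alpha> \<epsilon> \<inter> neg_space \<theta>1) (mult br \<theta>1 \<theta>2 A \<alpha> \<epsilon>) Y \<and>
    bracket_identities br A \<alpha> (mult br \<theta>1 \<theta>2 A \<alpha> \<epsilon>) X Y \<and>
    (\<forall>H\<epsilon>\<in>A. \<alpha> \<bullet> H\<epsilon> = phi_eps \<epsilon> \<longrightarrow>
       orthonormal_basis_of (V_space br \<theta>1 \<theta>2 A \<alpha> \<epsilon> \<inter> fix_space \<theta>2) (mult br \<theta>1 \<theta>2 A \<alpha> \<epsilon>)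
         (\<lambda>i. inv (Ad_exp br H\<epsilon>) (X i)) \<and>
       orthonormal_basis_of (V_space br \<theta>1 \<theta>2 A \<alpha> \<epsilon> \<inter> neg_space \<theta>2) (mult br \<theta>1 \<theta>2 A \<alpha> \<epsilon>)
         (\<lambda>i. inv (Ad_exp br H\<epsilon>) (Y i)) \<and>
       bracket_identities br A \<alpha> (mult br \<theta>1 \<theta>2 A \<alpha> \<epsilon>)
         (\<lambda>i. inv (Ad_exp br H\<epsilon>) (X i)) (\<lambda>i. inv (Ad_exp br H\<epsilon>) (Y i)))"
proof -
  interpret LS br \<theta>1 \<theta>2 A \<epsilon> \<alpha>
    by unfold_locales (use assms in auto)
  show ?thesis by (rule main)
qed

end
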